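(* Let $a<b$, $\lambda>0$, let $H:\mathbb{R}\to\mathbb{R}$, $H(y):=\tfrac12\left(\tfrac12 y^2-\lambda\right)^2$, let $\theta\in C[a,b]$ with $\min_{x\in[a,b]}\theta(x)>0$, and let $F\in C^1[a,b]$ with $F(a)=F(b)=0$, $F(x)\neq 0$ for $x\in(a,b)$ and $\|F\|_\infty<(2\lambda/3)^{3/2}$. Let $X:=C_0[a,b]:=\{v\in C[a,b]\mid v(a)=v(b)=0\}$ be endowed with the norm $\|\cdot\|_p$ for some $p\in[1,\infty]$, and define $$K:X\to\mathbb{R},\qquad K(v):=\int_a^b\theta\cdot\big(H\circ v-Fv\big).$$ Then $K$ is Gâteaux differentiable (at every point of $X$); moreover, for $v\in X$, $K$ is Fréchet differentiable at $v$ if and only if $p\geq 4$.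
   Context: $\|\cdot\|_p$ denotes the $L^p(a,b)$-norm restricted to $X$ (for $p=\infty$ the supremum norm). Integrals are Riemann integrals over $[a,b]$. *)

theory Defs
  imports "HOL-Analysis.Analysis" "HOL-Library.Extended_Real"
begin

definition Hfun :: "real \<Rightarrow> real \<Rightarrow> real" where
  "Hfun lam y = (1/2) * ((1/2) * y ^ 2 - lam) ^ 2"

text \<open>The space C_0[a,b]; functions are represented as real-valued functions on the
  real line that vanish outside [a,b] (so that the representation is unique).\<close>
definition C0 :: "real \<Rightarrow> real \<Rightarrow> (real \<Rightarrow> real) set" where
  "C0 a b = {v. continuous_on {a..b} v \<and> v a = 0 \<and> v b = 0 \<and> (\<forall>x. x \<notin> {a..b} \<longrightarrow> v x = 0)}"

definition Lp_norm :: "ereal \<Rightarrow> real \<Rightarrow> real \<Rightarrow> (real \<Rightarrow> real) \<Rightarrow> real" where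
  "Lp_norm p a b v =
     (if p = \<infinity> then (SUP x\<in>{a..b}. \<bar>v x\<bar>)
      else (integral {a..b} (\<lambda>x. \<bar>v x\<bar> powr real_of_ereal p)) powr (1 / real_of_ereal p))"

definition bdd_linear_fun :: "(real \<Rightarrow> real) set \<Rightarrow> ((real \<Rightarrow> real) \<Rightarrow> real) \<Rightarrow> ((real \<Rightarrow> real) \<Rightarrow> real) \<Rightarrow> bool" where
  "bdd_linear_fun X N L \<longleftrightarrow>
     (\<forall>u\<in>X. \<forall>w\<in>X. L (\<lambda>x. u x + w x) = L u + L w) \<and>
     (\<forall>c. \<forall>u\<in>X. L (\<lambda>x. c * u x) = c * L u) \<and>
     (\<exists>C. \<forall>u\<in>X. \<bar>L u\<bar> \<le> C * N u)"

definition gateaux_differentiable :: "(real \<Rightarrow> real) set \<Rightarrow> ((real \<Rightarrow> real) \<Rightarrow> real) \<Rightarrow> ((real \<Rightarrow> real) \<Rightarrow> real) \<Rightarrow> (real \<Rightarrow> real) \<Rightarrow> bool" where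
  "gateaux_differentiable X N K v \<longleftrightarrow>
     (\<exists>L. bdd_linear_fun X N L \<and>
        (\<forall>h\<in>X. ((\<lambda>t. (K (\<lambda>x. v x + t * h x) - K v) / t) \<longlongrightarrow> L h) (at 0)))"

definition frechet_differentiable :: "(real \<Rightarrow> real) set \<Rightarrow> ((real \<Rightarrow> real) \<Rightarrow> real) \<Rightarrow> ((real \<Rightarrow> real) \<Rightarrow> real) \<Rightarrow> (real \<Rightarrow> real) \<Rightarrow> bool" where
  "frechet_differentiable X N K v \<longleftrightarrow>
     (\<exists>L. bdd_linear_fun X N L \<and>
        (\<forall>\<epsilon>>0. \<exists>\<delta>>0. \<forall>h\<in>X. N h < \<delta> \<longrightarrow>
            \<bar>K (\<lambda>x. v x + h x) - K v - L h\<bar> \<le> \<epsilon> * N h))"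

end

theory Submission
  imports Defs
begin


lemma cont_bound:
  fixes f :: "real \<Rightarrow> real"
  assumes "continuous_on {a..b} f"
  shows "\<exists>M>0. \<forall>x\<in>{a..b}. \<bar>f x\<bar> \<le> M"
proof -
  have "compact (f ` {a..b})" using compact_continuous_image[OF assms] by simp
  then have "bounded (f ` {a..b})" by (rule compact_imp_bounded)
  then obtain B where "B>0" "\<forall>y\<in>f ` {a..b}. norm y \<le> B" using bounded_pos by metis
  then show ?thesis by auto
qed

lemma young_pt:
  fixes y m q :: real
  assumes "y \<ge> 0" "m > 0" "q \<ge> 1"
  shows "y \<le> (1 - 1/q) * m + (y powr q) * m powr (1 - q) / q"
proof (cases "y = 0")
  case True then show ?thesis using assms by simp
next
  case False
  then have yp: "y > 0" using assms by simp
  have "((y/m) powr q) powr (1/q) * 1 powr (1 - 1/q) \<le> (1/q) * (y/m) powr q + (1 - 1/q) * 1"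
    by (rule Youngs_inequality_0) (use assms yp in auto)
  moreover have "((y/m) powr q) powr (1/q) = y/m" using assms yp by (simp add: powr_powr)
  ultimately have 1: "y/m \<le> (1/q) * (y/m) powr q + (1 - 1/q)" by simp
  have "(y/m) powr q = y powr q / m powr q" using assms yp by (simp add: powr_divide)
  have "m powr (1 - q) = m / m powr q" using assms by (simp add: powr_diff)
  have "y = m * (y/m)" using assms by simp
  also have "\<dots> \<le> m * ((1/q) * (y/m) powr q + (1 - 1/q))"
    using 1 assms by (intro mult_left_mono) auto
  also have "\<dots> = (1 - 1/q) * m + (y powr q) * m powr (1 - q) / q"
    unfolding \<open>(y/m) powr q = y powr q / m powr q\<close> \<open>m powr (1 - q) = m / m powr q\<close>
    using assms by (simp add: field_simps)
  finally show ?thesis .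
qed

lemma pow_mean:
  fixes g :: "real \<Rightarrow> real"
  assumes ab: "a < b" and q: "q \<ge> 1" and gc: "continuous_on {a..b} g"
    and g0: "\<forall>x\<in>{a..b}. g x \<ge> 0"
  shows "integral {a..b} g \<le> (b-a) powr (1 - 1/q) * (integral {a..b} (\<lambda>x. g x powr q)) powr (1/q)"
proof -
  define J where "J = integral {a..b} (\<lambda>x. g x powr q)"
  have gqc: "continuous_on {a..b} (\<lambda>x. g x powr q)"
    by (rule continuous_on_powr') (use gc g0 q in \<open>auto intro: continuous_intros\<close>)
  have J0: "J \<ge> 0" unfolding J_def
    by (rule integral_nonneg) (auto intro: integrable_continuous_interval[OF gqc])
  have key: "integral {a..b} g \<le> (1 - 1/q) * m * (b - a) + m powr (1 - q) / q * J" if m: "m > 0" for m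
  proof -
    have "integral {a..b} g \<le> integral {a..b} (\<lambda>x. (1 - 1/q) * m + (g x powr q) * (m powr (1 - q) / q))"
    proof (rule integral_le)
      show "g integrable_on {a..b}" by (rule integrable_continuous_interval[OF gc])
      show "(\<lambda>x. (1 - 1/q) * m + (g x powr q) * (m powr (1 - q) / q)) integrable_on {a..b}"
        by (intro integrable_continuous_interval continuous_intros gqc)
      fix x assume "x \<in> {a..b}"
      then show "g x \<le> (1 - 1/q) * m + (g x powr q) * (m powr (1 - q) / q)"
        using young_pt[OF _ m q, of "g x"] g0 by simp
    qed
    also have "\<dots> = (1 - 1/q) * m * (b - a) + m powr (1 - q) / q * J"
      unfolding J_def using ab q
      by (subst integral_add) (auto intro!: integrable_continuous_interval gqc continuous_intros)
    finally show ?thesis .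
  qed
  show ?thesis
  proof (cases "J = 0")
    case True
    have "integral {a..b} g \<le> 0 + e" if e: "e > 0" for e
    proof -
      have "1/q \<le> 1" using q by simp
      then have dp: "(1 - 1/q) * (b - a) + 1 > 0" using ab by (intro add_nonneg_pos mult_nonneg_nonneg) auto
      have "integral {a..b} g \<le> (1 - 1/q) * (e / ((1 - 1/q) * (b - a) + 1)) * (b - a)"
        using key[of "e / ((1 - 1/q) * (b - a) + 1)"] True e dp by simp
      also have "\<dots> = e * ((1 - 1/q) * (b - a) / ((1 - 1/q) * (b - a) + 1))" by simp
      also have "\<dots> \<le> e * 1"
        using e dp by (intro mult_left_mono) auto
      finally show ?thesis by simp
    qed
    then have "integral {a..b} g \<le> 0" by (rule field_le_epsilon)
    then show ?thesis using True unfolding J_def by simp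
  next
    case False
    then have Jp: "J > 0" using J0 by simp
    define m where "m = (J / (b - a)) powr (1/q)"
    have mp: "m > 0" unfolding m_def using Jp ab by simp
    have mq: "m powr q = J / (b - a)" unfolding m_def using Jp ab q by (simp add: powr_powr)
    have "m powr (1 - q) = m / m powr q" using mp by (simp add: powr_diff)
    then have "m powr (1 - q) / q * J = m * (b - a) / q"
      using mq Jp ab q by (simp add: field_simps)
    then have "integral {a..b} g \<le> (1 - 1/q) * m * (b - a) + m * (b - a) / q"
      using key[OF mp] by (simp only:)
    also have "\<dots> = m * (b - a)" using q by (simp add: field_simps)
    finally have "integral {a..b} g \<le> m * (b - a)" .
    also have "m * (b - a) = (b-a) powr (1 - 1/q) * J powr (1/q)"
    proof -
      have "m = J powr (1/q) / (b - a) powr (1/q)" unfolding m_def by (simp add: powr_divide)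
      moreover have "(b-a) powr (1 - 1/q) = (b - a) / (b - a) powr (1/q)"
        using ab by (simp add: powr_diff)
      ultimately show ?thesis by simp
    qed
    finally show ?thesis unfolding J_def .
  qed
qed

lemma int_abs_bound:
  fixes f g :: "real \<Rightarrow> real"
  assumes "continuous_on {a..b} f" "continuous_on {a..b} g"
    and "\<forall>x\<in>{a..b}. \<bar>f x\<bar> \<le> M * \<bar>g x\<bar>"
  shows "\<bar>integral {a..b} f\<bar> \<le> M * integral {a..b} (\<lambda>x. \<bar>g x\<bar>)"
proof -
  have i1: "f integrable_on {a..b}" by (rule integrable_continuous_interval[OF assms(1)])
  have i2: "(\<lambda>x. M * \<bar>g x\<bar>) integrable_on {a..b}"
    by (intro integrable_continuous_interval continuous_intros assms(2))
  have "integral {a..b} f \<le> integral {a..b} (\<lambda>x. M * \<bar>g x\<bar>)"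
    by (rule integral_le[OF i1 i2]) (use assms(3) in \<open>metis abs_ge_self order_trans\<close>)
  moreover have "- integral {a..b} f \<le> integral {a..b} (\<lambda>x. M * \<bar>g x\<bar>)"
  proof -
    have "integral {a..b} (\<lambda>x. - f x) \<le> integral {a..b} (\<lambda>x. M * \<bar>g x\<bar>)"
      by (rule integral_le[OF _ i2]) (use assms(3) i1 in \<open>auto simp: integrable_neg intro: abs_ge_minus_self order_trans\<close>)
    then show ?thesis by (simp add: integral_neg i1)
  qed
  ultimately show ?thesis by simp
qed

lemma pow_to_powr: "(y::real) \<ge> 0 \<Longrightarrow> k \<ge> 1 \<Longrightarrow> y ^ k = y powr (real k)"
  by (cases "y = 0") (auto simp: powr_realpow)

lemma Lp_nonneg:
  assumes "a \<le> b" "continuous_on {a..b} h"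
  shows "Lp_norm p a b h \<ge> 0"
proof (cases "p = \<infinity>")
  case True
  have "bounded (h ` {a..b})" by (rule compact_imp_bounded, rule compact_continuous_image[OF assms(2)]) simp
  then obtain B where "\<forall>x\<in>{a..b}. \<bar>h x\<bar> \<le> B" using bounded_pos by (metis imageI real_norm_def)
  then have "bdd_above ((\<lambda>x. \<bar>h x\<bar>) ` {a..b})" by (auto intro: bdd_aboveI2)
  then have "\<bar>h a\<bar> \<le> (SUP x\<in>{a..b}. \<bar>h x\<bar>)" using assms(1) by (intro cSUP_upper) auto
  then show ?thesis using True unfolding Lp_norm_def using abs_ge_zero order_trans by simp
next
  case False then show ?thesis unfolding Lp_norm_def by simp
qed

lemma Linf_ge:
  assumes "continuous_on {a..b} h" "x \<in> {a..b}"
  shows "\<bar>h x\<bar> \<le> Lp_norm \<infinity> a b h"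
proof -
  have "bounded (h ` {a..b})" by (rule compact_imp_bounded, rule compact_continuous_image[OF assms(1)]) simp
  then obtain B where "\<forall>x\<in>{a..b}. \<bar>h x\<bar> \<le> B" using bounded_pos by (metis imageI real_norm_def)
  then have "bdd_above ((\<lambda>x. \<bar>h x\<bar>) ` {a..b})" by (auto intro: bdd_aboveI2)
  then show ?thesis unfolding Lp_norm_def using cSUP_upper[OF assms(2)] by simp
qed

lemma moment_bound:
  fixes p :: ereal and k :: nat
  assumes ab: "a < b" and k: "1 \<le> k" and kp: "ereal (real k) \<le> p"
  shows "\<exists>C\<ge>0. \<forall>h. continuous_on {a..b} h \<longrightarrow>
           integral {a..b} (\<lambda>x. \<bar>h x\<bar> ^ k) \<le> C * Lp_norm p a b h ^ k"
proof (cases "p = \<infinity>")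
  case True
  show ?thesis
  proof (intro exI[of _ "b - a"] conjI allI impI)
    show "b - a \<ge> 0" using ab by simp
    fix h :: "real \<Rightarrow> real" assume hc: "continuous_on {a..b} h"
    have "integral {a..b} (\<lambda>x. \<bar>h x\<bar> ^ k) \<le> integral {a..b} (\<lambda>x. Lp_norm p a b h ^ k)"
      by (rule integral_le) (use hc True Linf_ge[OF hc] in \<open>auto intro!: integrable_continuous_interval continuous_intros power_mono\<close>)
    also have "\<dots> = (b - a) * Lp_norm p a b h ^ k" using ab by simp
    finally show "integral {a..b} (\<lambda>x. \<bar>h x\<bar> ^ k) \<le> (b - a) * Lp_norm p a b h ^ k" .
  qed
next
  case False
  then obtain r where pr: "p = ereal r" using kp by (cases p) auto
  have rk: "r \<ge> real k" using kp pr by simp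
  have k0: "real k \<ge> 1" using k by simp
  define q where "q = r / real k"
  have q1: "q \<ge> 1" unfolding q_def using rk k0 by simp
  show ?thesis
  proof (intro exI[of _ "(b-a) powr (1 - 1/q)"] conjI allI impI)
    show "(b-a) powr (1 - 1/q) \<ge> 0" by simp
    fix h :: "real \<Rightarrow> real" assume hc: "continuous_on {a..b} h"
    have eq: "(\<bar>h x\<bar> ^ k) powr q = \<bar>h x\<bar> powr r" for x
      using k k0 rk unfolding q_def by (simp add: pow_to_powr powr_powr)
    have "integral {a..b} (\<lambda>x. \<bar>h x\<bar> ^ k) \<le>
       (b-a) powr (1 - 1/q) * (integral {a..b} (\<lambda>x. (\<bar>h x\<bar> ^ k) powr q)) powr (1/q)"
      by (rule pow_mean[OF ab q1]) (auto intro!: continuous_intros hc)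
    also have "(integral {a..b} (\<lambda>x. (\<bar>h x\<bar> ^ k) powr q)) powr (1/q) = Lp_norm p a b h ^ k"
    proof -
      have "(integral {a..b} (\<lambda>x. (\<bar>h x\<bar> ^ k) powr q)) powr (1/q)
          = ((integral {a..b} (\<lambda>x. \<bar>h x\<bar> powr r)) powr (1/r)) powr (real k)"
        using k0 rk unfolding eq by (simp add: powr_powr q_def)
      also have "\<dots> = Lp_norm p a b h ^ k"
        unfolding Lp_norm_def using pr k by (simp add: pow_to_powr)
      finally show ?thesis .
    qed
    finally show "integral {a..b} (\<lambda>x. \<bar>h x\<bar> ^ k) \<le> (b-a) powr (1 - 1/q) * Lp_norm p a b h ^ k" .
  qed
qed

lemma Hexp: "(th::real) * (Hfun lam (v + t * h) - F * (v + t * h)) - th * (Hfun lam v - F * v)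
  = t * (th * ((1/2 * v^2 - lam) * v - F) * h) + t^2 * (th * (3/4 * v^2 - lam/2) * h^2)
     + t^3 * (th * v / 2 * h^3) + t^4 * (th / 8 * h^4)"
  unfolding Hfun_def by (simp add: field_simps power2_eq_square power3_eq_cube power4_eq_xxxx)

lemma expand:
  fixes \<theta> F v h :: "real \<Rightarrow> real"
  assumes c: "continuous_on {a..b} \<theta>" "continuous_on {a..b} F"
     "continuous_on {a..b} v" "continuous_on {a..b} h"
  shows "integral {a..b} (\<lambda>x. \<theta> x * (Hfun lam (v x + t * h x) - F x * (v x + t * h x)))
       - integral {a..b} (\<lambda>x. \<theta> x * (Hfun lam (v x) - F x * v x))
   = t * integral {a..b} (\<lambda>x. \<theta> x * ((1/2 * v x^2 - lam) * v x - F x) * h x)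
   + t^2 * integral {a..b} (\<lambda>x. \<theta> x * (3/4 * v x^2 - lam/2) * h x^2)
   + t^3 * integral {a..b} (\<lambda>x. \<theta> x * v x / 2 * h x^3)
   + t^4 * integral {a..b} (\<lambda>x. \<theta> x / 8 * h x^4)"
proof -
  have I: "\<And>f::real\<Rightarrow>real. continuous_on {a..b} f \<Longrightarrow> f integrable_on {a..b}"
    using integrable_continuous_interval by blast
  have "integral {a..b} (\<lambda>x. \<theta> x * (Hfun lam (v x + t * h x) - F x * (v x + t * h x)))
       - integral {a..b} (\<lambda>x. \<theta> x * (Hfun lam (v x) - F x * v x))
     = integral {a..b} (\<lambda>x. \<theta> x * (Hfun lam (v x + t * h x) - F x * (v x + t * h x))
          - \<theta> x * (Hfun lam (v x) - F x * v x))"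
    by (rule integral_diff[symmetric]; rule I; unfold Hfun_def; intro continuous_intros c)
  also have "\<dots> = integral {a..b} (\<lambda>x. t * (\<theta> x * ((1/2 * v x^2 - lam) * v x - F x) * h x)
     + t^2 * (\<theta> x * (3/4 * v x^2 - lam/2) * h x^2)
     + t^3 * (\<theta> x * v x / 2 * h x^3)
     + t^4 * (\<theta> x / 8 * h x^4))"
    by (rule integral_cong) (rule Hexp)
  also have "\<dots> = t * integral {a..b} (\<lambda>x. \<theta> x * ((1/2 * v x^2 - lam) * v x - F x) * h x)
   + t^2 * integral {a..b} (\<lambda>x. \<theta> x * (3/4 * v x^2 - lam/2) * h x^2)
   + t^3 * integral {a..b} (\<lambda>x. \<theta> x * v x / 2 * h x^3)
   + t^4 * integral {a..b} (\<lambda>x. \<theta> x / 8 * h x^4)"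
    by (intro integral_unique has_integral_add has_integral_mult_right integrable_integral I
          continuous_intros c) auto
  finally show ?thesis .
qed

lemma scale_integral:
  fixes g :: "real \<Rightarrow> real"
  assumes gc: "continuous_on {-1..1} g" and g0: "\<And>t. 1 \<le> \<bar>t\<bar> \<Longrightarrow> g t = 0"
    and s: "0 < s" "s \<le> (b - a) / 2"
  shows "integral {a..b} (\<lambda>x. g ((x - (a+b)/2) / s)) = s * integral {-1..1} g"
proof -
  define m where "m = (a+b)/2"
  define c where "c = - m / s"
  have "(g has_integral integral {-1..1} g) (cbox (-1) 1)"
    using integrable_continuous_interval[OF gc] by (simp add: cbox_interval integrable_integral)
  from has_integral_affinity'[OF this, of "1/s" c] s
  have h0: "((\<lambda>x. g ((1/s) * x + c)) has_integral s * integral {-1..1} g)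
          (cbox (s * (-1 - c)) (s * (1 - c)))" by simp
  have eqf: "(\<lambda>x. g ((1/s) * x + c)) = (\<lambda>x. g ((x - m) / s))"
    unfolding c_def using s by (auto simp: field_simps)
  have e1: "s * (-1 - c) = m - s" "s * (1 - c) = m + s"
    unfolding c_def using s by (simp_all add: field_simps)
  have h1: "((\<lambda>x. g ((x - m) / s)) has_integral s * integral {-1..1} g) {m - s .. m + s}"
    using h0 unfolding eqf e1 cbox_interval .
  have "((\<lambda>x. g ((x - m) / s)) has_integral s * integral {-1..1} g) {a..b}"
  proof (rule has_integral_on_superset[OF h1])
    fix x assume "x \<notin> {m - s .. m + s}"
    then have "s \<le> \<bar>x - m\<bar>" by auto
    then have "1 \<le> \<bar>(x - m) / s\<bar>" using s by simp
    then show "g ((x - m) / s) = 0" by (rule g0)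
  next
    show "{m - s .. m + s} \<subseteq> {a..b}" unfolding m_def using s by (auto simp: field_simps)
  qed
  then show ?thesis unfolding m_def by (rule integral_unique)
qed



lemma C0_cont': "v \<in> C0 a b \<Longrightarrow> continuous_on {a..b} v" unfolding C0_def by simp

lemma powr_times_self: "0 < (s::real) \<Longrightarrow> s powr E * s = s powr (E + 1)"
  by (simp add: powr_add)

lemma nonfrechet':
  fixes a b lam tm TM r :: real and \<theta> F v :: "real \<Rightarrow> real" and K :: "(real \<Rightarrow> real) \<Rightarrow> real"
  assumes ab: "a < b" and lam: "lam > 0" and c\<theta>: "continuous_on {a..b} \<theta>" and cF: "continuous_on {a..b} F"
    and tm: "tm > 0" "\<forall>x\<in>{a..b}. tm \<le> \<theta> x" and TM: "\<forall>x\<in>{a..b}. \<bar>\<theta> x\<bar> \<le> TM"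
    and Kdef: "\<And>v. K v = integral {a..b} (\<lambda>x. \<theta> x * (Hfun lam (v x) - F x * v x))"
    and v: "v \<in> C0 a b" and r: "1 \<le> r" "r < 4"
    and fr: "frechet_differentiable (C0 a b) (Lp_norm (ereal r) a b) K v"
  shows False
proof -
  have cv: "continuous_on {a..b} v" using v by (rule C0_cont')
  define \<phi> where "\<phi> t = max 0 (1 - \<bar>t\<bar>)" for t :: real
  have \<phi>c: "continuous_on S \<phi>" for S unfolding \<phi>_def by (intro continuous_intros)
  have \<phi>0: "\<phi> t = 0" if "1 \<le> \<bar>t\<bar>" for t using that unfolding \<phi>_def by simp
  have \<phi>nn: "\<phi> t \<ge> 0" for t unfolding \<phi>_def by simp
  have \<phi>le: "\<phi> t \<le> 1" for t unfolding \<phi>_def by simp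
  define I4 where "I4 = integral {-1..1} (\<lambda>t. \<phi> t ^ 4)"
  define I2 where "I2 = integral {-1..1} (\<lambda>t. \<phi> t ^ 2)"
  define Ir where "Ir = integral {-1..1} (\<lambda>t. \<phi> t powr r)"
  have \<phi>rc: "continuous_on S (\<lambda>t. \<phi> t powr r)" for S
    by (rule continuous_on_powr') (use \<phi>nn r in \<open>auto intro: \<phi>c continuous_intros\<close>)
  have I4pos: "I4 \<ge> 1/16"
  proof -
    have "integral {-1/2..1/2::real} (\<lambda>t. 1/16::real) \<le> integral {-1/2..1/2} (\<lambda>t. \<phi> t ^ 4)"
    proof (rule integral_le)
      fix t :: real assume "t \<in> {-1/2..1/2}"
      then have "1/2 \<le> \<phi> t" unfolding \<phi>_def by auto
      then have "(1/2::real)^4 \<le> \<phi> t ^ 4" by (rule power_mono) simp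
      moreover have "(1/2::real)^4 = 1/16" by (simp add: eval_nat_numeral)
      ultimately show "1/16 \<le> \<phi> t ^ 4" by simp
    qed (auto intro!: integrable_continuous_interval continuous_intros \<phi>c)
    also have "\<dots> \<le> I4" unfolding I4_def
      by (rule integral_subset_le) (auto intro!: integrable_continuous_interval continuous_intros \<phi>c)
    finally show ?thesis by simp
  qed
  have I2nn: "I2 \<ge> 0" unfolding I2_def
    by (rule integral_nonneg) (auto intro!: integrable_continuous_interval continuous_intros \<phi>c)
  have Irnn: "Ir \<ge> 0" unfolding Ir_def
    by (rule integral_nonneg) (auto intro!: integrable_continuous_interval \<phi>rc)
  define J where "J = Ir powr (1/r)"
  have J0: "J \<ge> 0" unfolding J_def by simp
  have TM0: "TM \<ge> 0" using TM ab by (meson abs_ge_zero atLeastAtMost_iff less_imp_le order_refl order_trans)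
  define Av where "Av = tm * I4 / 4"
  define Bv where "Bv = TM * lam * I2"
  have Av0: "Av > 0" unfolding Av_def using tm I4pos by simp
  have Bv0: "Bv \<ge> 0" unfolding Bv_def using TM0 lam I2nn by simp
  define \<epsilon> where "\<epsilon> = Av / (4 * (J + 1))"
  have e0: "\<epsilon> > 0" unfolding \<epsilon>_def using Av0 J0 by simp
  obtain L where Lb: "bdd_linear_fun (C0 a b) (Lp_norm (ereal r) a b) L"
    and Lf: "\<forall>\<epsilon>>0. \<exists>\<delta>>0. \<forall>h\<in>C0 a b. Lp_norm (ereal r) a b h < \<delta> \<longrightarrow>
            \<bar>K (\<lambda>x. v x + h x) - K v - L h\<bar> \<le> \<epsilon> * Lp_norm (ereal r) a b h"
    using fr unfolding frechet_differentiable_def by blast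
  obtain \<delta> where d0: "\<delta> > 0" and dP: "\<forall>h\<in>C0 a b. Lp_norm (ereal r) a b h < \<delta> \<longrightarrow>
            \<bar>K (\<lambda>x. v x + h x) - K v - L h\<bar> \<le> \<epsilon> * Lp_norm (ereal r) a b h"
    using Lf e0 by blast
  define \<alpha> where "\<alpha> = (r + 2) / (6 * r)"
  define e1 where "e1 = (4 - r) / (6 * r)"
  define e2 where "e2 = (4 - r) / (2 * r)"
  have \<alpha>0: "\<alpha> > 0" and e10: "e1 > 0" and e20: "e2 > 0" unfolding \<alpha>_def e1_def e2_def using r by auto
  define w1 where "w1 = (Av / (2 * (Bv + 1))) powr (1 / (2 * \<alpha>))"
  define w2 where "w2 = (\<delta> / (2 * (J + 1))) powr (1 / e1)"
  define s where "s = min (min 1 ((b - a) / 2)) (min w1 w2)"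
  have w1p: "w1 > 0" unfolding w1_def using Av0 Bv0 by simp
  have w2p: "w2 > 0" unfolding w2_def using d0 J0 by simp
  have s0: "s > 0" unfolding s_def using w1p w2p ab by simp
  have "s \<le> min 1 ((b - a) / 2)" "s \<le> min w1 w2" unfolding s_def by (rule min.cobounded1, rule min.cobounded2)
  then have s1: "s \<le> 1" and sab: "s \<le> (b - a) / 2" and sw1: "s \<le> w1" and sw2: "s \<le> w2"
    by simp_all
  have sA: "s powr (2 * \<alpha>) \<le> Av / (2 * (Bv + 1))"
  proof -
    have "s powr (2 * \<alpha>) \<le> w1 powr (2 * \<alpha>)" using s0 sw1 \<alpha>0 by (intro powr_mono2) auto
    also have "\<dots> = Av / (2 * (Bv + 1))" unfolding w1_def using \<alpha>0 Av0 Bv0 by (simp add: powr_powr)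
    finally show ?thesis .
  qed
  have sD: "s powr e1 \<le> \<delta> / (2 * (J + 1))"
  proof -
    have "s powr e1 \<le> w2 powr e1" using s0 sw2 e10 by (intro powr_mono2) auto
    also have "\<dots> = \<delta> / (2 * (J + 1))" unfolding w2_def using e10 d0 J0 by (simp add: powr_powr)
    finally show ?thesis .
  qed
  define c where "c = s powr (- \<alpha>)"
  define u where "u = s powr e1"
  define m where "m = (a + b) / 2"
  define h where "h x = c * \<phi> ((x - m) / s)" for x
  have c0: "c > 0" unfolding c_def using s0 by simp
  have u0: "u > 0" unfolding u_def using s0 by simp
  have out: "1 \<le> \<bar>(x - m) / s\<bar>" if "x \<notin> {a<..<b}" for x
  proof -
    have "s \<le> \<bar>x - m\<bar>" using that sab unfolding m_def by (auto simp: abs_if field_simps)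
    then show ?thesis using s0 by simp
  qed
  have hc: "continuous_on S h" for S unfolding h_def
    by (intro continuous_intros continuous_on_compose2[OF \<phi>c[of UNIV]]) (use s0 in auto)
  have hz: "h x = 0" if "x \<notin> {a<..<b}" for x unfolding h_def using \<phi>0[OF out[OF that]] by simp
  have hX: "h \<in> C0 a b" unfolding C0_def using hc hz by auto
  have mhX: "(\<lambda>x. - h x) \<in> C0 a b" unfolding C0_def using hc hz by (auto intro: continuous_intros)
  have Nh: "Lp_norm (ereal r) a b h = u * J"
  proof -
    have pw: "\<bar>h x\<bar> powr r = c powr r * (\<phi> ((x - m) / s) powr r)" for x
      unfolding h_def using c0 \<phi>nn by (simp add: abs_mult powr_mult)
    have "integral {a..b} (\<lambda>x. \<bar>h x\<bar> powr r) = c powr r * (s * Ir)"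
      unfolding pw integral_mult_right Ir_def m_def
      by (subst scale_integral[OF \<phi>rc _ s0 sab]) (use \<phi>0 r in auto)
    then have "Lp_norm (ereal r) a b h = (c powr r * (s * Ir)) powr (1/r)"
      unfolding Lp_norm_def by simp
    also have "\<dots> = (c powr r) powr (1/r) * s powr (1/r) * Ir powr (1/r)"
      using c0 s0 Irnn by (simp add: powr_mult)
    also have "(c powr r) powr (1/r) = c" using r c0 by (simp add: powr_powr)
    also have "c * s powr (1/r) = u" unfolding c_def u_def
    proof -
      have "s powr (- \<alpha>) * s powr (1/r) = s powr (- \<alpha> + 1/r)" by (rule powr_add[symmetric])
      also have "- \<alpha> + 1/r = e1" unfolding \<alpha>_def e1_def using r by (simp add: field_simps)
      finally show "s powr (- \<alpha>) * s powr (1/r) = s powr e1" .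
    qed
    finally show ?thesis unfolding J_def .
  qed
  have Nmh: "Lp_norm (ereal r) a b (\<lambda>x. - h x) = u * J" using Nh unfolding Lp_norm_def by simp
  have Int4: "integral {a..b} (\<lambda>x. h x ^ 4) = c ^ 4 * (s * I4)"
    unfolding h_def power_mult_distrib integral_mult_right I4_def m_def
    by (subst scale_integral[OF _ _ s0 sab]) (use \<phi>0 in \<open>auto intro!: continuous_intros \<phi>c\<close>)
  have Int2: "integral {a..b} (\<lambda>x. h x ^ 2) = c ^ 2 * (s * I2)"
    unfolding h_def power_mult_distrib integral_mult_right I2_def m_def
    by (subst scale_integral[OF _ _ s0 sab]) (use \<phi>0 in \<open>auto intro!: continuous_intros \<phi>c\<close>)
  define Lh where "Lh = integral {a..b} (\<lambda>x. \<theta> x * ((1/2 * v x^2 - lam) * v x - F x) * h x)"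
  define Ah where "Ah = integral {a..b} (\<lambda>x. \<theta> x * (3/4 * v x^2 - lam/2) * h x^2)"
  define Bh where "Bh = integral {a..b} (\<lambda>x. \<theta> x * v x / 2 * h x^3)"
  define Dh where "Dh = integral {a..b} (\<lambda>x. \<theta> x / 8 * h x^4)"
  have ex1: "K (\<lambda>x. v x + 1 * h x) - K v = 1 * Lh + 1^2 * Ah + 1^3 * Bh + 1^4 * Dh"
    unfolding Kdef Lh_def Ah_def Bh_def Dh_def by (rule expand[OF c\<theta> cF cv hc])
  have ex2: "K (\<lambda>x. v x + (-1) * h x) - K v = (-1) * Lh + (-1)^2 * Ah + (-1)^3 * Bh + (-1)^4 * Dh"
    unfolding Kdef Lh_def Ah_def Bh_def Dh_def by (rule expand[OF c\<theta> cF cv hc])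
  have Ksym: "K (\<lambda>x. v x + h x) + K (\<lambda>x. v x + - h x) - 2 * K v = 2 * Ah + 2 * Dh"
    using ex1 ex2 by simp
  have \<theta>0: "\<forall>x\<in>{a..b}. 0 \<le> \<theta> x" using tm by (meson less_imp_le order_trans)
  have Alow: "Ah \<ge> - (TM * lam / 2) * (c ^ 2 * (s * I2))"
  proof -
    have "integral {a..b} (\<lambda>x. - (TM * lam / 2) * h x ^ 2) \<le> Ah"
      unfolding Ah_def
    proof (rule integral_le)
      fix x assume x: "x \<in> {a..b}"
      have t1: "0 \<le> \<theta> x * (3/4 * v x^2)" using \<theta>0 x by simp
      have "\<bar>\<theta> x\<bar> \<le> TM" using TM x by blast
      then have "\<theta> x \<le> TM" by linarith
      then have t2: "\<theta> x * lam / 2 \<le> TM * lam / 2" using lam by (auto intro!: divide_right_mono mult_right_mono)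
      have "- (TM * lam / 2) \<le> \<theta> x * (3/4 * v x^2 - lam/2)"
        using t1 t2 by (simp add: right_diff_distrib)
      then show "- (TM * lam / 2) * h x ^ 2 \<le> \<theta> x * (3/4 * v x^2 - lam/2) * h x ^ 2"
        by (rule mult_right_mono) simp
    qed (auto intro!: integrable_continuous_interval continuous_intros hc c\<theta> cv)
    then show ?thesis using Int2 by simp
  qed
  have Dlow: "Dh \<ge> tm / 8 * (c ^ 4 * (s * I4))"
  proof -
    have "integral {a..b} (\<lambda>x. tm / 8 * h x ^ 4) \<le> Dh"
      unfolding Dh_def
    proof (rule integral_le)
      fix x assume x: "x \<in> {a..b}"
      have "tm / 8 \<le> \<theta> x / 8" using tm x by simp
      then show "tm / 8 * h x ^ 4 \<le> \<theta> x / 8 * h x ^ 4"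
        by (rule mult_right_mono) simp
    qed (auto intro!: integrable_continuous_interval continuous_intros hc c\<theta>)
    then show ?thesis using Int4 by simp
  qed
  have NJ: "u * J < \<delta>"
  proof -
    have "u * J \<le> \<delta> / (2 * (J + 1)) * J" using sD J0 unfolding u_def by (intro mult_right_mono) auto
    also have "\<dots> < \<delta>"
    proof -
      show ?thesis using d0 J0 by (simp add: field_simps) (intro add_nonneg_pos mult_nonneg_nonneg; simp)
    qed
    finally show ?thesis .
  qed
  have up1: "\<bar>K (\<lambda>x. v x + h x) - K v - L h\<bar> \<le> \<epsilon> * (u * J)"
    using dP hX Nh NJ by auto
  have up2: "\<bar>K (\<lambda>x. v x + - h x) - K v - L (\<lambda>x. - h x)\<bar> \<le> \<epsilon> * (u * J)"
    using dP mhX Nmh NJ by auto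
  have Lneg: "L (\<lambda>x. - h x) = - L h"
  proof -
    have "L (\<lambda>x. (-1) * h x) = (-1) * L h" using Lb hX unfolding bdd_linear_fun_def by blast
    then show ?thesis by simp
  qed
  have up: "2 * Ah + 2 * Dh \<le> 2 * \<epsilon> * (u * J)"
    using up1 up2 Ksym Lneg by (simp add: abs_le_iff)
  have c2: "c ^ 2 = s powr (- \<alpha> + - \<alpha>)"
    unfolding c_def power2_eq_square by (rule powr_add[symmetric])
  have c4: "c ^ 4 = s powr ((- \<alpha> + - \<alpha>) + (- \<alpha> + - \<alpha>))"
  proof -
    have "c ^ 4 = c ^ 2 * c ^ 2" by (simp add: power_add[symmetric])
    also have "\<dots> = s powr (- \<alpha> + - \<alpha>) * s powr (- \<alpha> + - \<alpha>)" unfolding c2 ..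
    also have "\<dots> = s powr ((- \<alpha> + - \<alpha>) + (- \<alpha> + - \<alpha>))" by (rule powr_add[symmetric])
    finally show ?thesis .
  qed
  define P where "P = s powr (- e2)"
  define S2 where "S2 = s powr (2 * \<alpha>)"
  have Q: "c ^ 4 * s = u * P"
  proof -
    have "c ^ 4 * s = s powr ((- \<alpha> + - \<alpha>) + (- \<alpha> + - \<alpha>) + 1)"
      unfolding c4 using s0 by (rule powr_times_self)
    also have "(- \<alpha> + - \<alpha>) + (- \<alpha> + - \<alpha>) + 1 = e1 + - e2"
      unfolding \<alpha>_def e1_def e2_def using r by (simp add: field_simps)
    also have "s powr (e1 + - e2) = u * P" unfolding u_def P_def by (rule powr_add)
    finally show ?thesis .
  qed
  have Q2: "c ^ 2 * s = (c ^ 4 * s) * S2"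
  proof -
    have "c ^ 2 * s = s powr ((- \<alpha> + - \<alpha>) + 1)" unfolding c2 using s0 by (rule powr_times_self)
    also have "(- \<alpha> + - \<alpha>) + 1 = ((- \<alpha> + - \<alpha>) + (- \<alpha> + - \<alpha>) + 1) + 2 * \<alpha>" by simp
    also have "s powr \<dots> = (c ^ 4 * s) * S2"
      unfolding c4 S2_def using s0 by (simp only: powr_add) simp
    finally show ?thesis .
  qed
  have P1: "P \<ge> 1"
  proof -
    have "s powr e2 \<le> 1 powr e2" using s0 s1 e20 by (intro powr_mono2) auto
    then have "s powr e2 \<le> 1" by simp
    moreover have "s powr e2 > 0" using s0 by simp
    ultimately show ?thesis unfolding P_def by (simp add: powr_minus one_le_inverse)
  qed
  have S20: "S2 \<ge> 0" unfolding S2_def by simp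
  have BS: "Bv * S2 \<le> Av / 2"
  proof -
    have "Bv * S2 \<le> Bv * (Av / (2 * (Bv + 1)))" using sA Bv0 unfolding S2_def by (intro mult_left_mono) auto
    also have "\<dots> \<le> Av / 2" using Av0 Bv0 by (simp add: field_simps)
    finally show ?thesis .
  qed
  have low: "2 * Ah + 2 * Dh \<ge> Av * (c ^ 4 * s) - Bv * (c ^ 2 * s)"
    using Alow Dlow unfolding Av_def Bv_def by (simp add: algebra_simps)
  define Qv where "Qv = c ^ 4 * s"
  have Qv: "Qv \<ge> u" unfolding Qv_def Q using u0 P1 by simp
  have "Av * Qv - Bv * (Qv * S2) = Qv * (Av - Bv * S2)" by (simp add: algebra_simps)
  also have "\<dots> \<ge> Qv * (Av / 2)" using BS Qv u0 by (intro mult_left_mono) auto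
  finally have "Av * Qv - Bv * (Qv * S2) \<ge> Qv * (Av / 2)" .
  moreover have "Qv * (Av / 2) \<ge> u * (Av / 2)" using Qv Av0 by (intro mult_right_mono) auto
  ultimately have lo2: "2 * Ah + 2 * Dh \<ge> u * (Av / 2)" using low unfolding Qv_def Q2 by linarith
  have "2 * \<epsilon> * (u * J) = u * (Av / 2) * (J / (J + 1))" unfolding \<epsilon>_def using J0 by (simp add: field_simps)
  also have "\<dots> < u * (Av / 2) * 1" using u0 Av0 J0 by (intro mult_strict_left_mono) auto
  finally have "2 * \<epsilon> * (u * J) < u * (Av / 2)" by simp
  then show False using up lo2 by linarith
qed



lemma C0_cont: "v \<in> C0 a b \<Longrightarrow> continuous_on {a..b} v" unfolding C0_def by simp

lemma absk': "\<bar>c\<bar> \<le> M \<Longrightarrow> \<bar>c * y ^ k\<bar> \<le> M * \<bar>\<bar>y::real\<bar> ^ k\<bar>"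
  by (simp add: abs_mult power_abs mult_right_mono)

theorem proposition1:
  fixes a b lam :: real and \<theta> F :: "real \<Rightarrow> real" and p :: ereal
    and K :: "(real \<Rightarrow> real) \<Rightarrow> real"
  assumes "a < b" and "lam > 0"
    and "continuous_on {a..b} \<theta>" and "(INF x\<in>{a..b}. \<theta> x) > 0"
    and "\<exists>F'. (\<forall>x\<in>{a..b}. (F has_real_derivative F' x) (at x within {a..b}))
               \<and> continuous_on {a..b} F'"
    and "F a = 0" and "F b = 0" and "\<forall>x\<in>{a<..<b}. F x \<noteq> 0"
    and "(SUP x\<in>{a..b}. \<bar>F x\<bar>) < (2 * lam / 3) powr (3/2)"
    and "1 \<le> p"
    and "\<And>v. K v = integral {a..b} (\<lambda>x. \<theta> x * (Hfun lam (v x) - F x * v x))"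
  shows "(\<forall>v\<in>C0 a b. gateaux_differentiable (C0 a b) (Lp_norm p a b) K v) \<and>
         (\<forall>v\<in>C0 a b. frechet_differentiable (C0 a b) (Lp_norm p a b) K v \<longleftrightarrow> p \<ge> 4)"
proof -
  note ab = assms(1) and lam = assms(2) and c\<theta> = assms(3) and Kdef = assms(11) and p1 = assms(10)
  define N where "N = Lp_norm p a b"
  define X where "X = C0 a b"
  have cF: "continuous_on {a..b} F"
    using assms(5) DERIV_continuous_on by blast
  obtain TM where TM: "TM > 0" "\<forall>x\<in>{a..b}. \<bar>\<theta> x\<bar> \<le> TM" using cont_bound[OF c\<theta>] by blast
  define tm where "tm = (INF x\<in>{a..b}. \<theta> x)"
  have tm0: "tm > 0" using assms(4) unfolding tm_def .
  have "bdd_below (\<theta> ` {a..b})"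
  proof (rule bdd_belowI2)
    fix x assume "x \<in> {a..b}"
    with TM(2) have "\<bar>\<theta> x\<bar> \<le> TM" by blast
    then show "-TM \<le> \<theta> x" by linarith
  qed
  then have tmle: "\<forall>x\<in>{a..b}. tm \<le> \<theta> x" unfolding tm_def by (auto intro: cINF_lower)
  have Xc: "\<And>h. h \<in> X \<Longrightarrow> continuous_on {a..b} h" unfolding X_def by (rule C0_cont)
  have Nnn: "\<And>h. h \<in> X \<Longrightarrow> N h \<ge> 0" unfolding N_def using ab Xc Lp_nonneg by (meson less_imp_le)
  define P where "P v x = \<theta> x * ((1/2 * v x^2 - lam) * v x - F x)" for v :: "real \<Rightarrow> real" and x
  define L0 where "L0 v h = integral {a..b} (\<lambda>x. P v x * h x)" for v h :: "real \<Rightarrow> real"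
  define A where "A v h = integral {a..b} (\<lambda>x. \<theta> x * (3/4 * v x^2 - lam/2) * h x^2)" for v h :: "real \<Rightarrow> real"
  define B where "B v h = integral {a..b} (\<lambda>x. \<theta> x * v x / 2 * h x^3)" for v h :: "real \<Rightarrow> real"
  define D where "D h = integral {a..b} (\<lambda>x. \<theta> x / 8 * h x^4)" for h :: "real \<Rightarrow> real"
  have Kexp: "K (\<lambda>x. v x + t * h x) - K v = t * L0 v h + t^2 * A v h + t^3 * B v h + t^4 * D h"
    if "v \<in> X" "h \<in> X" for v h t
    unfolding Kdef L0_def P_def A_def B_def D_def by (rule expand) (use c\<theta> cF Xc that in auto)
  have bdd: "bdd_linear_fun X N (L0 v)" if v: "v \<in> X" for v
  proof -
    have cP: "continuous_on {a..b} (P v)"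
      unfolding P_def by (intro continuous_intros c\<theta> cF Xc v)
    obtain M where M: "M > 0" "\<forall>x\<in>{a..b}. \<bar>P v x\<bar> \<le> M"
      using cont_bound[OF cP] by blast
    obtain C1 where C1: "C1 \<ge> 0" "\<forall>h. continuous_on {a..b} h \<longrightarrow>
           integral {a..b} (\<lambda>x. \<bar>h x\<bar> ^ 1) \<le> C1 * N h ^ 1"
      using moment_bound[OF ab, of 1 p] p1 unfolding N_def by (auto simp: one_ereal_def)
    show ?thesis unfolding bdd_linear_fun_def
    proof (intro conjI ballI allI exI)
      fix u w assume u: "u \<in> X" and w: "w \<in> X"
      show "L0 v (\<lambda>x. u x + w x) = L0 v u + L0 v w"
        unfolding L0_def distrib_left
        by (rule integral_add) (auto intro!: integrable_continuous_interval continuous_intros cP Xc[OF u] Xc[OF w])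
    next
      fix c u assume u: "u \<in> X"
      show "L0 v (\<lambda>x. c * u x) = c * L0 v u"
        unfolding L0_def by (subst integral_mult_right[symmetric]) (simp add: algebra_simps)
    next
      fix u assume u: "u \<in> X"
      have "\<bar>L0 v u\<bar> \<le> M * integral {a..b} (\<lambda>x. \<bar>u x\<bar>)"
        unfolding L0_def
        by (rule int_abs_bound) (use M in \<open>auto intro!: continuous_intros cP Xc[OF u] simp: abs_mult mult_right_mono\<close>)
      also have "\<dots> \<le> M * (C1 * N u)"
        using C1 Xc[OF u] M by (intro mult_left_mono) auto
      finally show "\<bar>L0 v u\<bar> \<le> (M * C1) * N u" by simp
    qed
  qed
  have absk: "\<And>f M h x k. \<bar>f x\<bar> \<le> M \<Longrightarrow> \<bar>f x * h x ^ k\<bar> \<le> M * \<bar>\<bar>h x::real\<bar> ^ k\<bar>"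
    by (simp add: abs_mult power_abs mult_right_mono)
  show ?thesis
  proof (intro conjI ballI)
    fix v assume v: "v \<in> C0 a b"
    then have vX: "v \<in> X" by (simp add: X_def)
    show "gateaux_differentiable (C0 a b) (Lp_norm p a b) K v"
      unfolding gateaux_differentiable_def
    proof (intro exI conjI ballI)
      show "bdd_linear_fun (C0 a b) (Lp_norm p a b) (L0 v)" using bdd[OF vX] unfolding X_def N_def .
      fix h assume h: "h \<in> C0 a b"
      then have hX: "h \<in> X" by (simp add: X_def)
      have ev: "\<forall>\<^sub>F t in at 0. L0 v h + t * A v h + t^2 * B v h + t^3 * D h
                 = (K (\<lambda>x. v x + t * h x) - K v) / t"
      proof -
        have "\<forall>\<^sub>F t in at (0::real). t \<noteq> 0" by (simp add: eventually_at_filter)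
        then show ?thesis
        proof (rule eventually_mono)
          fix t :: real assume "t \<noteq> 0"
          then show "L0 v h + t * A v h + t^2 * B v h + t^3 * D h = (K (\<lambda>x. v x + t * h x) - K v) / t"
            unfolding Kexp[OF vX hX] by (simp add: field_simps power2_eq_square power3_eq_cube power4_eq_xxxx)
        qed
      qed
      have lim: "((\<lambda>t. L0 v h + t * A v h + t^2 * B v h + t^3 * D h) \<longlongrightarrow> L0 v h) (at 0)"
        by (rule tendsto_eq_intros refl)+ simp
      show "((\<lambda>t. (K (\<lambda>x. v x + t * h x) - K v) / t) \<longlongrightarrow> L0 v h) (at 0)"
        using Lim_transform_eventually[OF lim ev] .
    qed
    show "frechet_differentiable (C0 a b) (Lp_norm p a b) K v \<longleftrightarrow> p \<ge> 4"
    proof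
      assume fr: "frechet_differentiable (C0 a b) (Lp_norm p a b) K v"
      show "p \<ge> 4"
      proof (rule ccontr)
        assume "\<not> 4 \<le> p"
        then have "p < 4" by simp
        then obtain r where pr: "p = ereal r" "r < 4" using p1 by (cases p) auto
        have r1: "1 \<le> r" using p1 pr by (simp add: one_ereal_def)
        show False
          by (rule nonfrechet'[OF ab lam c\<theta> cF tm0 tmle TM(2) Kdef v r1 pr(2)]) (use fr pr in simp)
      qed
    next
      assume p4: "p \<ge> 4"
      have kp: "ereal (real k) \<le> p" if "k \<le> 4" for k :: nat
        using p4 that by (cases p) auto
      obtain C2 where C2: "C2 \<ge> 0" "\<forall>h. continuous_on {a..b} h \<longrightarrow>
           integral {a..b} (\<lambda>x. \<bar>h x\<bar> ^ 2) \<le> C2 * N h ^ 2"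
        using moment_bound[OF ab _ kp, of 2] unfolding N_def by auto
      obtain C3 where C3: "C3 \<ge> 0" "\<forall>h. continuous_on {a..b} h \<longrightarrow>
           integral {a..b} (\<lambda>x. \<bar>h x\<bar> ^ 3) \<le> C3 * N h ^ 3"
        using moment_bound[OF ab _ kp, of 3] unfolding N_def by auto
      obtain C4 where C4: "C4 \<ge> 0" "\<forall>h. continuous_on {a..b} h \<longrightarrow>
           integral {a..b} (\<lambda>x. \<bar>h x\<bar> ^ 4) \<le> C4 * N h ^ 4"
        using moment_bound[OF ab _ kp, of 4] unfolding N_def by auto
      have "continuous_on {a..b} (\<lambda>x. \<theta> x * (3/4 * v x^2 - lam/2))" by (intro continuous_intros c\<theta> Xc[OF vX]) auto
      then obtain M2 where M2: "M2 > 0" "\<forall>x\<in>{a..b}. \<bar>\<theta> x * (3/4 * v x^2 - lam/2)\<bar> \<le> M2"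
        using cont_bound by blast
      have "continuous_on {a..b} (\<lambda>x. \<theta> x * v x / 2)" by (intro continuous_intros c\<theta> Xc[OF vX]) auto
      then obtain M3 where M3: "M3 > 0" "\<forall>x\<in>{a..b}. \<bar>\<theta> x * v x / 2\<bar> \<le> M3"
        using cont_bound by blast
      have "continuous_on {a..b} (\<lambda>x. \<theta> x / 8)" by (intro continuous_intros c\<theta> Xc[OF vX]) auto
      then obtain M4 where M4: "M4 > 0" "\<forall>x\<in>{a..b}. \<bar>\<theta> x / 8\<bar> \<le> M4"
        using cont_bound by blast
      define S where "S = M2 * C2 + M3 * C3 + M4 * C4"
      have S0: "S \<ge> 0" unfolding S_def using M2 M3 M4 C2 C3 C4 by simp
      show "frechet_differentiable (C0 a b) (Lp_norm p a b) K v"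
        unfolding frechet_differentiable_def
      proof (intro exI[of _ "L0 v"] conjI allI impI)
        show "bdd_linear_fun (C0 a b) (Lp_norm p a b) (L0 v)" using bdd[OF vX] unfolding X_def N_def .
        fix \<epsilon> :: real assume e: "\<epsilon> > 0"
        define \<delta> where "\<delta> = min 1 (\<epsilon> / (S + 1))"
        show "\<exists>\<delta>>0. \<forall>h\<in>C0 a b. Lp_norm p a b h < \<delta> \<longrightarrow>
            \<bar>K (\<lambda>x. v x + h x) - K v - L0 v h\<bar> \<le> \<epsilon> * Lp_norm p a b h"
        proof (intro exI[of _ \<delta>] conjI ballI impI)
          show "\<delta> > 0" unfolding \<delta>_def using e S0 by simp
          fix h assume h: "h \<in> C0 a b" and hN: "Lp_norm p a b h < \<delta>"
          then have hX: "h \<in> X" by (simp add: X_def)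
          have hc: "continuous_on {a..b} h" using Xc[OF hX] .
          define n where "n = N h"
          have n0: "n \<ge> 0" unfolding n_def using Nnn[OF hX] .
          have n1: "n \<le> 1" and ne: "n \<le> \<epsilon> / (S + 1)" using hN unfolding n_def N_def \<delta>_def by auto
          have "K (\<lambda>x. v x + h x) - K v - L0 v h = A v h + B v h + D h"
            using Kexp[OF vX hX, of 1] by simp
          moreover have "\<bar>A v h\<bar> \<le> M2 * (C2 * n^2)"
          proof -
            have "\<bar>A v h\<bar> \<le> M2 * integral {a..b} (\<lambda>x. \<bar>\<bar>h x\<bar> ^ 2\<bar>)"
              unfolding A_def
            proof (rule int_abs_bound)
              show "\<forall>x\<in>{a..b}. \<bar>\<theta> x * (3/4 * v x^2 - lam/2) * h x ^ 2\<bar> \<le> M2 * \<bar>\<bar>h x\<bar> ^ 2\<bar>" using M2(2) absk' by blast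
            qed (intro continuous_intros c\<theta> Xc[OF vX] hc; simp)+
            also have "\<dots> \<le> M2 * (C2 * n^2)" using C2 hc M2 unfolding n_def by (intro mult_left_mono) auto
            finally show ?thesis .
          qed
          moreover have "\<bar>B v h\<bar> \<le> M3 * (C3 * n^3)"
          proof -
            have "\<bar>B v h\<bar> \<le> M3 * integral {a..b} (\<lambda>x. \<bar>\<bar>h x\<bar> ^ 3\<bar>)"
              unfolding B_def
            proof (rule int_abs_bound)
              show "\<forall>x\<in>{a..b}. \<bar>\<theta> x * v x / 2 * h x ^ 3\<bar> \<le> M3 * \<bar>\<bar>h x\<bar> ^ 3\<bar>" using M3(2) absk' by blast
            qed (intro continuous_intros c\<theta> Xc[OF vX] hc; simp)+
            also have "\<dots> \<le> M3 * (C3 * n^3)" using C3 hc M3 unfolding n_def by (intro mult_left_mono) auto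
            finally show ?thesis .
          qed
          moreover have "\<bar>D h\<bar> \<le> M4 * (C4 * n^4)"
          proof -
            have "\<bar>D h\<bar> \<le> M4 * integral {a..b} (\<lambda>x. \<bar>\<bar>h x\<bar> ^ 4\<bar>)"
              unfolding D_def
            proof (rule int_abs_bound)
              show "\<forall>x\<in>{a..b}. \<bar>\<theta> x / 8 * h x ^ 4\<bar> \<le> M4 * \<bar>\<bar>h x\<bar> ^ 4\<bar>" using M4(2) absk' by blast
            qed (intro continuous_intros c\<theta> hc; simp)+
            also have "\<dots> \<le> M4 * (C4 * n^4)" using C4 hc M4 unfolding n_def by (intro mult_left_mono) auto
            finally show ?thesis .
          qed
          moreover have "n^3 \<le> n^2" "n^4 \<le> n^2" using n0 n1 by (auto intro: power_decreasing)
          ultimately have "\<bar>K (\<lambda>x. v x + h x) - K v - L0 v h\<bar> \<le> S * n^2"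
          proof -
            assume eq: "K (\<lambda>x. v x + h x) - K v - L0 v h = A v h + B v h + D h"
              and b2: "\<bar>A v h\<bar> \<le> M2 * (C2 * n^2)" and b3: "\<bar>B v h\<bar> \<le> M3 * (C3 * n^3)"
              and b4: "\<bar>D h\<bar> \<le> M4 * (C4 * n^4)" and p3: "n^3 \<le> n^2" and p4': "n^4 \<le> n^2"
            have "M3 * (C3 * n^3) \<le> M3 * (C3 * n^2)" using p3 M3 C3 by (intro mult_left_mono) auto
            moreover have "M4 * (C4 * n^4) \<le> M4 * (C4 * n^2)" using p4' M4 C4 by (intro mult_left_mono) auto
            ultimately show ?thesis unfolding eq S_def using b2 b3 b4 by (simp add: algebra_simps)
          qed
          also have "S * n^2 = (S * n) * n" by (simp add: power2_eq_square)
          also have "\<dots> \<le> \<epsilon> * n"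
          proof (rule mult_right_mono[OF _ n0])
            have "S * n \<le> S * (\<epsilon> / (S + 1))" using ne S0 by (intro mult_left_mono) auto
            also have "\<dots> \<le> \<epsilon>" using S0 e by (simp add: field_simps)
            finally show "S * n \<le> \<epsilon>" .
          qed
          finally show "\<bar>K (\<lambda>x. v x + h x) - K v - L0 v h\<bar> \<le> \<epsilon> * Lp_norm p a b h"
            unfolding n_def N_def .
        qed
      qed
    qed
  qed
qed
end
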